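(* Let $E$ be a real affine space of dimension $n$ with a system of coordinates $\mathcal L=(\ell_1,\dots,\ell_n)$, and let $\mathcal P,\mathcal Q$ be Yao-Yao partitions of $E$ adapted to $\mathcal L$, with centers $x$ and $y$ respectively. Suppose that for some $k<n$: $\mathcal P(\epsilon_1,\dots,\epsilon_k)=\mathcal Q(\epsilon_1,\dots,\epsilon_k)$ for all $(\epsilon_1,\dots,\epsilon_k)\in\{-1,1\}^k$, and there exists $(\epsilon'_1,\dots,\epsilon'_{k+1})\in\{-1,1\}^{k+1}$ with $\mathcal P(\epsilon'_1,\dots,\epsilon'_{k+1})\neq\mathcal Q(\epsilon'_1,\dots,\epsilon'_{k+1})$. If $x_{k+1}\ge y_{k+1}$, then there exist $\delta_1,\dots,\delta_k\in\{-1,1\}$ such that $\mathcal P(\delta_1,\dots,\delta_k,1)$ is strictly included in $\mathcal Q(\delta_1,\dots,\delta_k,1)$.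
   Context: $\vec E$ is the vector space of $E$. A partition of $E$ is a collection of subsets covering $E$ whose distinct members have disjoint interiors. Yao-Yao partitions and their centers are defined by induction on dimension: if $E=\{x\}$, the Yao-Yao partition is $\{\{x\}\}$, with center $x$; if $\dim E=n\ge1$, $\mathcal P$ is a Yao-Yao partition of $E$ with center $x$ if there exist an affine hyperplane $F$, a vector $v\in\vec E\setminus\vec F$ (the axis) and two Yao-Yao partitions $\mathcal P_1,\mathcal P_{-1}$ of $F$ with the same center $x$ such that $\mathcal P=\{A+\mathbb R_-v: A\in\mathcal P_{-1}\}\cup\{A+\mathbb R_+v: A\in\mathcal P_1\}$. A system of coordinates is a family $(\ell_1,\dots,\ell_n)$ of affine forms such that $x\mapsto(\ell_i(x))_i$ is a bijection $E\to\mathbb R^n$; write $x_i=\ell_i(x)$, $v_i=\vec\ell_i(v)$. A Yao-Yao partition given by $F,v,x,\mathcal P_1,\mathcal P_{-1}$ is adapted to $(\ell_1,\dots,\ell_n)$ if $F=\{z: z_1=x_1\}$ and $\mathcal P_1,\mathcal P_{-1}$ are adapted to the system $(\ell_2|_F,\dots,\ell_n|_F)$ of $F$ (in dimension $0$ every Yao-Yao partition is adapted). For an adapted partition one may take the axis normalized, $v_1=1$ (replacing $v$ by $v/v_1$, and exchanging $\mathcal P_1,\mathcal P_{-1}$ if $v_1<0$). With such a normalized presentation, define $\mathcal P(\emptyset)=E$ and, for $(\epsilon_1,\dots,\epsilon_k)\in\{-1,1\}^k$, $1\le k\le n$, recursively $\mathcal P(\epsilon_1,\dots,\epsilon_k)=\mathcal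 P_{\epsilon_1}(\epsilon_2,\dots,\epsilon_k)+\mathbb R_+(\epsilon_1 v)$, where $\mathcal P_{\epsilon_1}(\cdot)$ is the analogous object for the partition $\mathcal P_{\epsilon_1}$ of $F$ (with $\mathcal P_{\epsilon_1}(\emptyset)=F$). Then $\mathcal P=\{\mathcal P(\epsilon):\epsilon\in\{-1,1\}^n\}$. *)

theory Defs
  imports "HOL-Analysis.Analysis"
begin

text \<open>The real affine space E is modelled as a real vector space 'a (vectors of E = 'a).
  Coordinates are indexed from 0: L 0, ..., L (n-1) correspond to l_1, ..., l_n.\<close>

definition affine_form :: "('a::real_vector \<Rightarrow> real) \<Rightarrow> bool" where
  "affine_form f \<longleftrightarrow> linear (\<lambda>z. f z - f 0)"

definition lin_part :: "('a::real_vector \<Rightarrow> real) \<Rightarrow> 'a \<Rightarrow> real" where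
  "lin_part f v = f v - f 0"

definition coord_system :: "nat \<Rightarrow> (nat \<Rightarrow> 'a::real_vector \<Rightarrow> real) \<Rightarrow> bool" where
  "coord_system n L \<longleftrightarrow> (\<forall>i<n. affine_form (L i)) \<and>
     bij_betw (\<lambda>z. map (\<lambda>i. L i z) [0..<n]) UNIV {xs. length xs = n}"

text \<open>The axis used after choosing signs s = (e_1,...,e_j) (j < n) is  a s ; it is the axis
  of the sub-partition P_{e_1}...(e_j) of the affine subspace {z. z_i = x_i, i <= j}, hence
  its linear coordinates 1..j vanish (it lies in the direction of that subspace) and it is
  normalized: its (j+1)-th linear coordinate is 1.\<close>
definition yy_adapted ::
  "nat \<Rightarrow> (nat \<Rightarrow> 'a::real_vector \<Rightarrow> real) \<Rightarrow> 'a \<Rightarrow> (real list \<Rightarrow> 'a) \<Rightarrow> bool" where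
  "yy_adapted n L x a \<longleftrightarrow>
     (\<forall>s. length s < n \<and> set s \<subseteq> {-1, 1} \<longrightarrow>
        (\<forall>i<length s. lin_part (L i) (a s) = 0) \<and> lin_part (L (length s)) (a s) = 1)"

text \<open>The cells: yy_cell L x a s es is the set P_{s}(es) of the sub-partition reached after the
  signs s, i.e. yy_cell L x a [] es = P(es), with P(emptyset) the whole current subspace and
  P(e # es) = P_e(es) + R_+ (e v).\<close>
fun yy_cell ::
  "(nat \<Rightarrow> 'a::real_vector \<Rightarrow> real) \<Rightarrow> 'a \<Rightarrow> (real list \<Rightarrow> 'a) \<Rightarrow> real list \<Rightarrow> real list \<Rightarrow> 'a set" where
  "yy_cell L x a s [] = {z. \<forall>i<length s. L i z = L i x}"
| "yy_cell L x a s (e # es) =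
     {p + t *\<^sub>R (e *\<^sub>R a s) | p t. p \<in> yy_cell L x a (s @ [e]) es \<and> t \<ge> 0}"

end

theory Submission
  imports Defs
begin


lemma aff_add: "affine_form f \<Longrightarrow> f (p + v) = f p + lin_part f v"
  unfolding affine_form_def lin_part_def
  using real_vector.linear_add[of "\<lambda>z. f z - f 0" p v] by simp

lemma aff_diff: "affine_form f \<Longrightarrow> f (p - v) = f p - lin_part f v"
  using aff_add[of f p "- v"] unfolding affine_form_def lin_part_def
  using real_vector.linear_diff[of "\<lambda>z. f z - f 0" 0 v] by simp

lemma lin_scale: "affine_form f \<Longrightarrow> lin_part f (c *\<^sub>R v) = c * lin_part f v"
  unfolding affine_form_def lin_part_def
  using linear_cmul[of "\<lambda>z. f z - f 0" c v] by simp

lemma lin_add: "affine_form f \<Longrightarrow> lin_part f (u + v) = lin_part f u + lin_part f v"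
  unfolding affine_form_def lin_part_def
  using real_vector.linear_add[of "\<lambda>z. f z - f 0" u v] by simp

lemma lin_diff: "affine_form f \<Longrightarrow> lin_part f (u - v) = lin_part f u - lin_part f v"
  unfolding affine_form_def lin_part_def
  using real_vector.linear_diff[of "\<lambda>z. f z - f 0" u v] by simp

lemma adapt0: "yy_adapted n L x a \<Longrightarrow> length s < n \<Longrightarrow> set s \<subseteq> {-1,1} \<Longrightarrow> i < length s
  \<Longrightarrow> lin_part (L i) (a s) = 0"
  unfolding yy_adapted_def by blast

lemma adapt1: "yy_adapted n L x a \<Longrightarrow> length s < n \<Longrightarrow> set s \<subseteq> {-1,1}
  \<Longrightarrow> lin_part (L (length s)) (a s) = 1"
  unfolding yy_adapted_def by blast

primrec prj :: "(nat \<Rightarrow> 'a::real_vector \<Rightarrow> real) \<Rightarrow> 'a \<Rightarrow> (real list \<Rightarrow> 'a) \<Rightarrow> real list \<Rightarrow> 'a \<Rightarrow> nat \<Rightarrow> 'a" where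
  "prj L x a ds z 0 = z"
| "prj L x a ds z (Suc i) = prj L x a ds z i - (L i (prj L x a ds z i) - L i x) *\<^sub>R a (take i ds)"

lemma prj_take: "i \<le> length ds \<Longrightarrow> prj L x a (ds @ es) z i = prj L x a ds z i"
  by (induction i) auto

lemma prj_id: "(\<forall>i'<i. L i' z = L i' x) \<Longrightarrow> prj L x a ds z i = z"
  by (induction i) auto

lemma prj_stable: "m \<le> i \<Longrightarrow> (\<forall>i'. m \<le> i' \<and> i' < i \<longrightarrow> L i' (prj L x a ds z i') = L i' x)
  \<Longrightarrow> prj L x a ds z i = prj L x a ds z m"
  by (induction i) (auto simp: le_Suc_eq)

lemma prj_from: "m \<le> i \<Longrightarrow> prj L x a ds z m = prj L x a ds z' m
  \<Longrightarrow> prj L x a ds z i = prj L x a ds z' i"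
  by (induction i) (auto simp: le_Suc_eq)

lemma prj_coord:
  assumes "affine_form (L c)"
  shows "L c (prj L x a ds z i) = L c z
     - (\<Sum>j<i. (L j (prj L x a ds z j) - L j x) * lin_part (L c) (a (take j ds)))"
  by (induction i) (simp_all add: aff_diff[OF assms] lin_scale[OF assms])

lemma prj_fix:
  assumes aff: "\<forall>i<n. affine_form (L i)" and ad: "yy_adapted n L x a"
    and "set ds \<subseteq> {-1,1}" "length ds \<le> n" "i \<le> length ds" "c < i"
  shows "L c (prj L x a ds z i) = L c x"
  using assms(5,6)
proof (induction i)
  case 0 then show ?case by simp
next
  case (Suc i)
  have ac: "affine_form (L c)" using aff Suc.prems assms(4) by auto
  have st: "set (take i ds) \<subseteq> {-1,1}" using assms(3) by (meson order_trans set_take_subset)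
  have lt: "length (take i ds) < n" using Suc.prems assms(4) by simp
  have ltk: "length (take i ds) = i" using Suc.prems by simp
  show ?case
  proof (cases "c = i")
    case True
    have ac': "affine_form (L i)" using ac True by simp
    show ?thesis using adapt1[OF ad lt st] ltk True
      by (simp add: aff_diff[OF ac'] lin_scale[OF ac'])
  next
    case False
    then have "c < i" using Suc.prems by simp
    then show ?thesis using Suc.IH Suc.prems adapt0[OF ad lt st, of c] ltk
      by (simp add: aff_diff[OF ac] lin_scale[OF ac])
  qed
qed



lemma sign_sq: "e \<in> {-1,1::real} \<Longrightarrow> e * e = 1" by auto

lemma cell_mem:
  assumes aff: "\<forall>i<n. affine_form (L i)" and ad: "yy_adapted n L x a"
    and "set (s @ es) \<subseteq> {-1,1}" "length (s @ es) \<le> n"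
  shows "z \<in> yy_cell L x a s es \<longleftrightarrow> (\<forall>i<length s. L i z = L i x) \<and>
     (\<forall>i. length s \<le> i \<and> i < length (s @ es) \<longrightarrow>
        (s @ es) ! i * (L i (prj L x a (s @ es) z i) - L i x) \<ge> 0)"
  using assms(3,4)
proof (induction es arbitrary: s z)
  case Nil
  then show ?case by auto
next
  case (Cons e es)
  define m where "m = length s"
  define ds where "ds = s @ e # es"
  have ds2: "ds = (s @ [e]) @ es" unfolding ds_def by simp
  have e: "e \<in> {-1,1}" using Cons.prems by auto
  have ee: "e * e = 1" using sign_sq[OF e] .
  have mn: "m < n" using Cons.prems unfolding m_def by simp
  have ss: "set s \<subseteq> {-1,1}" using Cons.prems by auto
  have affm: "affine_form (L m)" using aff mn by simp
  have a0: "\<And>i. i < m \<Longrightarrow> lin_part (L i) (a s) = 0"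
    using adapt0[OF ad _ ss] mn unfolding m_def by blast
  have a1: "lin_part (L m) (a s) = 1" using adapt1[OF ad _ ss] mn unfolding m_def by blast
  have affi: "\<And>i. i \<le> m \<Longrightarrow> affine_form (L i)" using aff mn by simp
  have tk: "take m ds = s" unfolding ds_def m_def by simp
  have dsm: "ds ! m = e" unfolding ds_def m_def by simp
  have IH: "\<And>p. p \<in> yy_cell L x a (s @ [e]) es \<longleftrightarrow> (\<forall>i<Suc m. L i p = L i x) \<and>
     (\<forall>i. Suc m \<le> i \<and> i < length ds \<longrightarrow> ds ! i * (L i (prj L x a ds p i) - L i x) \<ge> 0)"
    using Cons.IH[of "s @ [e]"] Cons.prems unfolding ds2 m_def by simp
  have lenm: "m < length ds" unfolding ds_def m_def by simp
  show ?case unfolding ds_def[symmetric] m_def[symmetric]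
  proof
    assume "z \<in> yy_cell L x a s (e # es)"
    then obtain p t where z: "z = p + t *\<^sub>R (e *\<^sub>R a s)" and p: "p \<in> yy_cell L x a (s @ [e]) es"
      and t: "t \<ge> 0" by auto
    from p IH have pc: "\<forall>i<Suc m. L i p = L i x" and
      pr: "\<forall>i. Suc m \<le> i \<and> i < length ds \<longrightarrow> ds ! i * (L i (prj L x a ds p i) - L i x) \<ge> 0"
      by blast+
    have zc: "\<forall>i<m. L i z = L i x"
    proof (intro allI impI)
      fix i assume i: "i < m"
      have "L i z = L i p + t * (e * lin_part (L i) (a s))"
        unfolding z using affi[of i] i by (simp add: aff_add lin_scale)
      then show "L i z = L i x" using a0[OF i] pc i by simp
    qed
    have zm: "L m z = L m x + t * e"
      unfolding z using pc a1 by (simp add: aff_add[OF affm] lin_scale[OF affm])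
    have pm: "prj L x a ds z m = z" using prj_id zc by blast
    have pS: "prj L x a ds z (Suc m) = p"
      using pm zm tk unfolding z by (simp add: algebra_simps)
    have pS': "prj L x a ds p (Suc m) = p" using prj_id pc by blast
    have eqp: "\<And>i. Suc m \<le> i \<Longrightarrow> prj L x a ds z i = prj L x a ds p i"
      using prj_from pS pS' by metis
    show "(\<forall>i<m. L i z = L i x) \<and>
     (\<forall>i. m \<le> i \<and> i < length ds \<longrightarrow> ds ! i * (L i (prj L x a ds z i) - L i x) \<ge> 0)"
    proof (intro conjI zc allI impI)
      fix i assume i: "m \<le> i \<and> i < length ds"
      show "ds ! i * (L i (prj L x a ds z i) - L i x) \<ge> 0"
      proof (cases "i = m")
        case True
        have "ds ! i * (L i (prj L x a ds z i) - L i x) = t * (e * e)"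
          using True pm zm dsm by simp
        then show ?thesis using ee t by simp
      next
        case False
        then show ?thesis using pr eqp i by simp
      qed
    qed
  next
    assume H: "(\<forall>i<m. L i z = L i x) \<and>
     (\<forall>i. m \<le> i \<and> i < length ds \<longrightarrow> ds ! i * (L i (prj L x a ds z i) - L i x) \<ge> 0)"
    define t where "t = e * (L m z - L m x)"
    define p where "p = z - (L m z - L m x) *\<^sub>R a s"
    have pm: "prj L x a ds z m = z" using prj_id H by blast
    have t0: "t \<ge> 0" using H lenm pm dsm unfolding t_def by auto
    have z: "z = p + t *\<^sub>R (e *\<^sub>R a s)"
      proof -
      have ee': "\<And>c. e * (e * c) = c" using ee by (metis mult.assoc mult_1)
      show ?thesis unfolding p_def t_def by (simp add: algebra_simps ee')
    qed
    have pc: "\<forall>i<Suc m. L i p = L i x"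
    proof (intro allI impI)
      fix i assume i: "i < Suc m"
      show "L i p = L i x"
      proof (cases "i = m")
        case True
        then show ?thesis unfolding p_def using a1 by (simp add: aff_diff[OF affm] lin_scale[OF affm])
      next
        case False
        then have im: "i < m" using i by simp
        have "L i p = L i z" unfolding p_def using affi[of i] im a0[OF im]
          by (simp add: aff_diff lin_scale)
        then show ?thesis using H im by simp
      qed
    qed
    have pS: "prj L x a ds z (Suc m) = p" using pm tk unfolding p_def by simp
    have pS': "prj L x a ds p (Suc m) = p" using prj_id pc by blast
    have eqp: "\<And>i. Suc m \<le> i \<Longrightarrow> prj L x a ds z i = prj L x a ds p i"
      using prj_from pS pS' by metis
    have "p \<in> yy_cell L x a (s @ [e]) es"
      unfolding IH using pc H eqp by (metis (no_types, lifting) Suc_le_eq less_imp_le_nat)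
    then show "z \<in> yy_cell L x a s (e # es)" using z t0 by auto
  qed
qed



definition memc :: "(nat \<Rightarrow> 'a::real_vector \<Rightarrow> real) \<Rightarrow> 'a \<Rightarrow> (real list \<Rightarrow> 'a) \<Rightarrow> real list \<Rightarrow> 'a \<Rightarrow> bool" where
  "memc L x a ds z \<longleftrightarrow> (\<forall>i<length ds. ds ! i * (L i (prj L x a ds z i) - L i x) \<ge> 0)"

lemma memb:
  assumes "\<forall>i<n. affine_form (L i)" "yy_adapted n L x a" "set ds \<subseteq> {-1,1}" "length ds \<le> n"
  shows "z \<in> yy_cell L x a [] ds \<longleftrightarrow> memc L x a ds z"
  using cell_mem[OF assms(1,2), of "[]" ds z] assms(3,4) unfolding memc_def by simp

lemma prj_agree:
  assumes aff: "\<forall>i<n. affine_form (L i)" and ada: "yy_adapted n L x a"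
    and adb: "yy_adapted n L y b" and kn: "k < n"
    and hx: "\<forall>c<j. L c x = L c y"
    and hl: "\<forall>c<j. \<forall>s. set s \<subseteq> {-1,1} \<and> length s < k \<longrightarrow> lin_part (L c) (a s) = lin_part (L c) (b s)"
    and jk: "j \<le> k" and ds: "set ds \<subseteq> {-1,1}" "length ds = k"
  shows "i \<le> k \<Longrightarrow> \<forall>c<j. L c (prj L y b ds z i) = L c (prj L x a ds z i)"
proof (induction i)
  case 0 then show ?case by simp
next
  case (Suc i)
  have st: "set (take i ds) \<subseteq> {-1,1}" using ds by (meson order_trans set_take_subset)
  have lt: "length (take i ds) < k" and li: "length (take i ds) = i" using Suc.prems ds by auto
  show ?case
  proof (intro allI impI)
    fix c assume c: "c < j"
    have ac: "affine_form (L c)" using aff c jk kn by auto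
    show "L c (prj L y b ds z (Suc i)) = L c (prj L x a ds z (Suc i))"
    proof (cases "i < j")
      case True
      then show ?thesis using Suc.IH Suc.prems c hx hl st lt
        by (simp add: aff_diff[OF ac] lin_scale[OF ac])
    next
      case False
      have "lin_part (L c) (a (take i ds)) = 0" "lin_part (L c) (b (take i ds)) = 0"
        using adapt0[OF ada, of "take i ds" c] adapt0[OF adb, of "take i ds" c] lt li st kn False c
        by auto
      then show ?thesis using Suc.IH Suc.prems c
        by (simp add: aff_diff[OF ac] lin_scale[OF ac])
    qed
  qed
qed



lemma A_step:
  assumes aff: "\<forall>i<n. affine_form (L i)" and ada: "yy_adapted n L x a"
    and adb: "yy_adapted n L y b" and kn: "k < n"
    and hx: "\<forall>c<j. L c x = L c y"
    and hl: "\<forall>c<j. \<forall>s. set s \<subseteq> {-1,1} \<and> length s < k \<longrightarrow> lin_part (L c) (a s) = lin_part (L c) (b s)"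
    and jk: "j < k"
    and eq: "\<forall>ds z. set ds \<subseteq> {-1,1} \<and> length ds = k \<longrightarrow> (memc L x a ds z \<longleftrightarrow> memc L y b ds z)"
  shows "L j x = L j y \<and> (\<forall>s. set s \<subseteq> {-1,1} \<and> length s < k \<longrightarrow> lin_part (L j) (a s) = lin_part (L j) (b s))"
proof -
  have aj: "affine_form (L j)" using aff jk kn by simp
  have xj: "L j x = L j y"
  proof -
    have "e * (L j x - L j y) \<ge> 0" if e: "e \<in> {-1,1}" for e
    proof -
      define ds where "ds = (replicate k (1::real))[j := e]"
      have ds: "set ds \<subseteq> {-1,1}" "length ds = k" "ds ! j = e"
        unfolding ds_def using e jk set_update_subset_insert[of "replicate k (1::real)" j e]
        by (auto simp: nth_list_update)
      have "prj L x a ds x i = x" for i by (rule prj_id) simp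
      then have "memc L x a ds x" unfolding memc_def by simp
      then have "memc L y b ds x" using eq ds by blast
      then have "ds ! j * (L j (prj L y b ds x j) - L j y) \<ge> 0" unfolding memc_def using ds(2) jk by blast
      moreover have "prj L y b ds x j = x" by (rule prj_id) (use hx in simp)
      ultimately show ?thesis using ds by simp
    qed
    from this[of 1] this[of "-1"] show ?thesis by simp
  qed
  have "lin_part (L j) (a s) = lin_part (L j) (b s)" if s: "set s \<subseteq> {-1,1}" "length s < k" for s
  proof (cases "length s < j")
    case False
    show ?thesis
    proof (cases "length s = j")
      case True
      then show ?thesis using adapt1[OF ada, of s] adapt1[OF adb, of s] s kn by auto
    next
      case False
      then show ?thesis using adapt0[OF ada, of s j] adapt0[OF adb, of s j] s kn \<open>\<not> length s < j\<close> by auto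
    qed
  next
    case True
    define m where "m = length s"
    have mj: "m < j" using True m_def by simp
    have am: "affine_form (L m)" using aff mj jk kn by simp
    have a0: "\<And>i. i < m \<Longrightarrow> lin_part (L i) (a s) = 0"
      using adapt0[OF ada _ s(1)] s kn unfolding m_def by auto
    have a1: "lin_part (L m) (a s) = 1" using adapt1[OF ada _ s(1)] s kn unfolding m_def by auto
    have b1: "lin_part (L m) (b s) = 1" using adapt1[OF adb _ s(1)] s kn unfolding m_def by auto
    define z where "z = x + a s"
    have zc: "\<forall>i<m. L i z = L i x"
      unfolding z_def using a0 aff mj jk kn by (auto simp: aff_add)
    have zm: "L m z = L m x + 1" unfolding z_def using a1 by (simp add: aff_add[OF am])
    have "e * (lin_part (L j) (a s) - lin_part (L j) (b s)) \<ge> 0" if e: "e \<in> {-1,1}" for e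
    proof -
      define ds where "ds = (s @ replicate (k - m) (1::real))[j := e]"
      have ds: "set ds \<subseteq> {-1,1}" "length ds = k" "ds ! j = e" "ds ! m = 1" "take m ds = s"
        unfolding ds_def using e jk mj s m_def
          set_update_subset_insert[of "s @ replicate (k - m) (1::real)" j e]
        by (auto simp: nth_list_update nth_append take_update_cancel)
      have pPm: "prj L x a ds z i = z" if "i \<le> m" for i
        by (rule prj_id) (use zc that in auto)
      have pPS: "prj L x a ds z (Suc m) = x"
        using pPm[of m] zm ds(5) unfolding z_def by simp
      have px: "prj L x a ds x i = x" for i by (rule prj_id) simp
      have pPg: "prj L x a ds z i = x" if "Suc m \<le> i" for i
        using prj_from[OF that, of L x a ds z x] pPS px by simp
      have "memc L x a ds z" unfolding memc_def
      proof (intro allI impI)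
        fix i assume "i < length ds"
        show "ds ! i * (L i (prj L x a ds z i) - L i x) \<ge> 0"
        proof (cases "i < m")
          case True then show ?thesis using pPm[of i] zc by simp
        next
          case False
          show ?thesis
          proof (cases "i = m")
            case True then show ?thesis using pPm[of i] zm ds by simp
          next
            case False then show ?thesis using pPg[of i] \<open>\<not> i < m\<close> by simp
          qed
        qed
      qed
      then have "memc L y b ds z" using eq ds by blast
      then have "ds ! j * (L j (prj L y b ds z j) - L j y) \<ge> 0" unfolding memc_def using ds(2) jk by blast
      then have H: "e * (L j (prj L y b ds z j) - L j y) \<ge> 0" using ds(3) by simp
      have agree: "\<forall>c<j. L c (prj L y b ds z i) = L c (prj L x a ds z i)" if "i \<le> k" for i
        using prj_agree[OF aff ada adb kn hx hl _ ds(1,2) that] jk by simp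
      have pQm: "prj L y b ds z m = z" by (rule prj_id) (use zc hx mj in auto)
      have pQS: "prj L y b ds z (Suc m) = z - b s"
        using pQm zm ds(5) hx mj by simp
      have pQj: "prj L y b ds z j = prj L y b ds z (Suc m)"
      proof (rule prj_stable)
        show "Suc m \<le> j" using mj by simp
        show "\<forall>i'. Suc m \<le> i' \<and> i' < j \<longrightarrow> L i' (prj L y b ds z i') = L i' y"
        proof (intro allI impI)
          fix i' assume i': "Suc m \<le> i' \<and> i' < j"
          then have "L i' (prj L y b ds z i') = L i' (prj L x a ds z i')" using agree[of i'] jk by simp
          also have "\<dots> = L i' x" using pPg i' by simp
          finally show "L i' (prj L y b ds z i') = L i' y" using hx i' by simp
        qed
      qed
      have "L j (prj L y b ds z j) = L j (z - b s)" using pQj pQS by simp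
      also have "\<dots> = L j x + lin_part (L j) (a s) - lin_part (L j) (b s)"
        unfolding z_def by (simp add: aff_diff[OF aj] aff_add[OF aj])
      finally have "L j (prj L y b ds z j) = L j x + lin_part (L j) (a s) - lin_part (L j) (b s)" .
      then show ?thesis using H xj by simp
    qed
    from this[of 1] this[of "-1"] show ?thesis by simp
  qed
  then show ?thesis using xj by blast
qed

lemma A_all:
  assumes aff: "\<forall>i<n. affine_form (L i)" and ada: "yy_adapted n L x a"
    and adb: "yy_adapted n L y b" and kn: "k < n"
    and eq: "\<forall>ds z. set ds \<subseteq> {-1,1} \<and> length ds = k \<longrightarrow> (memc L x a ds z \<longleftrightarrow> memc L y b ds z)"
  shows "j \<le> k \<Longrightarrow> (\<forall>c<j. L c x = L c y) \<and>
     (\<forall>c<j. \<forall>s. set s \<subseteq> {-1,1} \<and> length s < k \<longrightarrow> lin_part (L c) (a s) = lin_part (L c) (b s))"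
proof (induction j)
  case 0 then show ?case by simp
next
  case (Suc j)
  then have "j < k" by simp
  from A_step[OF aff ada adb kn _ _ this eq] Suc show ?case
    by (auto simp: less_Suc_eq)
qed



primrec bld :: "(nat \<Rightarrow> 'a::real_vector \<Rightarrow> real) \<Rightarrow> nat \<Rightarrow> (real list \<Rightarrow> 'a) \<Rightarrow> (real list \<Rightarrow> 'a)
   \<Rightarrow> real list \<Rightarrow> nat \<Rightarrow> real list" where
  "bld L k a b d 0 = []"
| "bld L k a b d (Suc i) = bld L k a b d i @
     [if lin_part (L k) (b (bld L k a b d i)) < lin_part (L k) (a (bld L k a b d i)) then 1
      else if lin_part (L k) (a (bld L k a b d i)) < lin_part (L k) (b (bld L k a b d i)) then -1
      else d ! i]"

lemma bld_len[simp]: "length (bld L k a b d i) = i"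
  by (induction i) auto

lemma bld_set: "set d \<subseteq> {-1,1} \<Longrightarrow> i \<le> length d \<Longrightarrow> set (bld L k a b d i) \<subseteq> {-1,1}"
  by (induction i) (auto simp: subset_iff)

lemma bld_take: "i \<le> m \<Longrightarrow> take i (bld L k a b d m) = bld L k a b d i"
proof (induction m)
  case 0 then show ?case by simp
next
  case (Suc m)
  then show ?case by (cases "i = Suc m") (auto simp: le_Suc_eq)
qed

lemma bld_nth: "i < m \<Longrightarrow> bld L k a b d m ! i = bld L k a b d (Suc i) ! i"
proof -
  assume "i < m"
  then have "take (Suc i) (bld L k a b d m) = bld L k a b d (Suc i)" by (simp add: bld_take)
  then have "take (Suc i) (bld L k a b d m) ! i = bld L k a b d (Suc i) ! i" by simp
  then show ?thesis by simp
qed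

lemma bld_sign: "i < m \<Longrightarrow> bld L k a b d m ! i *
   (lin_part (L k) (a (bld L k a b d i)) - lin_part (L k) (b (bld L k a b d i))) \<ge> 0"
  by (simp add: bld_nth nth_append)

lemma bld_strict: "i < m \<Longrightarrow> lin_part (L k) (a (bld L k a b d i)) \<noteq> lin_part (L k) (b (bld L k a b d i))
  \<Longrightarrow> bld L k a b d m ! i *
   (lin_part (L k) (a (bld L k a b d i)) - lin_part (L k) (b (bld L k a b d i))) > 0"
  by (auto simp: bld_nth nth_append)

lemma bld_eq: "m \<le> length d \<Longrightarrow>
  (\<forall>i<m. lin_part (L k) (a (bld L k a b d i)) = lin_part (L k) (b (bld L k a b d i)))
  \<Longrightarrow> bld L k a b d m = take m d"
proof (induction m)
  case 0 then show ?case by simp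
next
  case (Suc m)
  then have bm: "bld L k a b d m = take m d" by simp
  have "lin_part (L k) (a (take m d)) = lin_part (L k) (b (take m d))"
    using Suc.prems(2) bm by (metis lessI)
  then show ?case using Suc.prems bm by (simp add: take_Suc_conv_app_nth)
qed

lemma memc_snoc: "length ds = k \<Longrightarrow> memc L x a (ds @ [e]) z \<longleftrightarrow>
   memc L x a ds z \<and> e * (L k (prj L x a ds z k) - L k x) \<ge> 0"
  unfolding memc_def by (auto simp: prj_take nth_append less_Suc_eq)

lemma sign_prod: "e \<in> {-1,1::real} \<Longrightarrow> e * u \<ge> 0 \<Longrightarrow> e * v \<ge> 0 \<Longrightarrow> u * v \<ge> 0"
  by (auto intro: mult_nonpos_nonpos)

lemma kcoord:
  assumes aff: "\<forall>i<n. affine_form (L i)" and ada: "yy_adapted n L x a"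
    and adb: "yy_adapted n L y b" and kn: "k < n"
    and hx: "\<forall>c<k. L c x = L c y"
    and hl: "\<forall>c<k. \<forall>s. set s \<subseteq> {-1,1} \<and> length s < k \<longrightarrow> lin_part (L c) (a s) = lin_part (L c) (b s)"
    and ds: "set ds \<subseteq> {-1,1}" "length ds = k"
  shows "L k (prj L y b ds z k) - L k y = (L k (prj L x a ds z k) - L k x) + (L k x - L k y)
     + (\<Sum>j<k. (L j (prj L x a ds z j) - L j x) *
          (lin_part (L k) (a (take j ds)) - lin_part (L k) (b (take j ds))))"
proof -
  have ak: "affine_form (L k)" using aff kn by simp
  have agree: "L j (prj L y b ds z j) - L j y = L j (prj L x a ds z j) - L j x" if "j < k" for j
    using prj_agree[OF aff ada adb kn hx hl order_refl ds, of j z] hx that by simp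
  have sQ: "(\<Sum>j<k. (L j (prj L y b ds z j) - L j y) * lin_part (L k) (b (take j ds)))
     = (\<Sum>j<k. (L j (prj L x a ds z j) - L j x) * lin_part (L k) (b (take j ds)))"
    by (rule sum.cong) (auto simp: agree)
  show ?thesis
    unfolding prj_coord[where L=L and c=k and x=x and a=a and ds=ds and z=z and i=k, OF ak]
      prj_coord[where L=L and c=k and x=y and a=b and ds=ds and z=z and i=k, OF ak] sQ
    by (simp add: right_diff_distrib sum_subtractf)
qed



theorem lemma9:
  fixes L :: "nat \<Rightarrow> 'a::real_vector \<Rightarrow> real"
    and n k :: nat and x y :: 'a and a b :: "real list \<Rightarrow> 'a"
  assumes "coord_system n L"
    and "yy_adapted n L x a"
    and "yy_adapted n L y b"
    and "k < n"
    and "\<forall>es. length es = k \<and> set es \<subseteq> {-1, 1} \<longrightarrow> yy_cell L x a [] es = yy_cell L y b [] es"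
    and "\<exists>es. length es = Suc k \<and> set es \<subseteq> {-1, 1} \<and> yy_cell L x a [] es \<noteq> yy_cell L y b [] es"
    and "L k x \<ge> L k y"
  shows "\<exists>ds. length ds = k \<and> set ds \<subseteq> {-1, 1} \<and>
           yy_cell L x a [] (ds @ [1]) \<subset> yy_cell L y b [] (ds @ [1])"
proof -
  have aff: "\<forall>i<n. affine_form (L i)" using assms(1) unfolding coord_system_def by blast
  note ada = assms(2) and adb = assms(3) and kn = assms(4)
  have ak: "affine_form (L k)" using aff kn by simp
  have eq: "\<forall>ds z. set ds \<subseteq> {-1,1} \<and> length ds = k \<longrightarrow> (memc L x a ds z \<longleftrightarrow> memc L y b ds z)"
  proof (intro allI impI)
    fix ds :: "real list" and z assume ds: "set ds \<subseteq> {-1,1} \<and> length ds = k"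
    then have "yy_cell L x a [] ds = yy_cell L y b [] ds" using assms(5) by blast
    then show "memc L x a ds z \<longleftrightarrow> memc L y b ds z"
      using memb[OF aff ada, of ds z] memb[OF aff adb, of ds z] ds kn by auto
  qed
  from A_all[OF aff ada adb kn eq, of k]
  have hx: "\<forall>c<k. L c x = L c y"
    and hl: "\<forall>c<k. \<forall>s. set s \<subseteq> {-1,1} \<and> length s < k \<longrightarrow> lin_part (L c) (a s) = lin_part (L c) (b s)"
    by auto
  obtain es where es: "length es = Suc k" "set es \<subseteq> {-1,1}" "yy_cell L x a [] es \<noteq> yy_cell L y b [] es"
    using assms(6) by blast
  define d where "d = take k es"
  define e' where "e' = es ! k"
  have esd: "es = d @ [e']" unfolding d_def e'_def using es(1)
    using take_Suc_conv_app_nth[of k es] by simp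
  have d: "length d = k" "set d \<subseteq> {-1,1}" using es unfolding d_def
    by (auto dest: in_set_takeD)
  define ds where "ds = bld L k a b d k"
  have dsk: "length ds = k" unfolding ds_def by simp
  have dss: "set ds \<subseteq> {-1,1}" unfolding ds_def using bld_set[OF d(2), of k L k a b] d(1) by simp
  have dss1: "set (ds @ [1]) \<subseteq> {-1,1}" using dss by simp
  have tk: "\<And>j. j < k \<Longrightarrow> take j ds = bld L k a b d j" unfolding ds_def by (simp add: bld_take)
  define \<alpha> where "\<alpha> j = lin_part (L k) (a (take j ds))" for j
  define \<beta> where "\<beta> j = lin_part (L k) (b (take j ds))" for j
  have sgn: "\<And>j. j < k \<Longrightarrow> ds ! j * (\<alpha> j - \<beta> j) \<ge> 0"
    unfolding \<alpha>_def \<beta>_def using tk bld_sign unfolding ds_def by simp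
  define cc where "cc z j = L j (prj L x a ds z j) - L j x" for z j
  have KC: "L k (prj L y b ds z k) - L k y = (L k (prj L x a ds z k) - L k x) + (L k x - L k y)
     + (\<Sum>j<k. cc z j * (\<alpha> j - \<beta> j))" for z
    unfolding cc_def \<alpha>_def \<beta>_def using kcoord[OF aff ada adb kn hx hl dss dsk] .
  have cellP: "z \<in> yy_cell L x a [] (ds @ [1]) \<longleftrightarrow> memc L x a ds z \<and> L k (prj L x a ds z k) - L k x \<ge> 0" for z
    using memb[OF aff ada dss1, of z] memc_snoc[OF dsk, of L x a 1 z] dsk kn by simp
  have cellQ: "z \<in> yy_cell L y b [] (ds @ [1]) \<longleftrightarrow> memc L x a ds z \<and> L k (prj L y b ds z k) - L k y \<ge> 0" for z
    using memb[OF aff adb dss1, of z] memc_snoc[OF dsk, of L y b 1 z] dsk kn eq dss by simp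
  have sub: "yy_cell L x a [] (ds @ [1]) \<subseteq> yy_cell L y b [] (ds @ [1])"
  proof
    fix z assume "z \<in> yy_cell L x a [] (ds @ [1])"
    then have m: "memc L x a ds z" and p: "L k (prj L x a ds z k) - L k x \<ge> 0" using cellP by auto
    have "(\<Sum>j<k. cc z j * (\<alpha> j - \<beta> j)) \<ge> 0"
    proof (rule sum_nonneg)
      fix j assume "j \<in> {..<k}"
      then have j: "j < k" by simp
      have "ds ! j \<in> {-1,1}" using dss j dsk by (auto simp: subset_iff)
      moreover have "ds ! j * cc z j \<ge> 0" using m j dsk unfolding memc_def cc_def by simp
      ultimately show "cc z j * (\<alpha> j - \<beta> j) \<ge> 0" using sign_prod sgn[OF j] by blast
    qed
    then show "z \<in> yy_cell L y b [] (ds @ [1])" using cellQ m p KC[of z] assms(7) by simp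
  qed
  have "\<exists>z. z \<in> yy_cell L y b [] (ds @ [1]) \<and> z \<notin> yy_cell L x a [] (ds @ [1])"
  proof (cases "L k x = L k y")
    case False
    define z where "z = x - (L k x - L k y) *\<^sub>R a ds"
    have a0: "\<And>c. c < k \<Longrightarrow> lin_part (L c) (a ds) = 0" using adapt0[OF ada _ dss] dsk kn by simp
    have a1: "lin_part (L k) (a ds) = 1" using adapt1[OF ada _ dss] dsk kn by simp
    have zc: "\<And>c. c < k \<Longrightarrow> L c z = L c x" unfolding z_def using a0 aff kn
      by (simp add: aff_diff lin_scale)
    have zk: "L k z = L k y" unfolding z_def using a1 by (simp add: aff_diff[OF ak] lin_scale[OF ak])
    have pz: "\<And>i. i \<le> k \<Longrightarrow> prj L x a ds z i = z" by (rule prj_id) (use zc in auto)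
    have "memc L x a ds z" unfolding memc_def using pz zc dsk by simp
    moreover have "(\<Sum>j<k. cc z j * (\<alpha> j - \<beta> j)) = 0"
      by (rule sum.neutral) (auto simp: cc_def pz zc less_imp_le)
    ultimately have "z \<in> yy_cell L y b [] (ds @ [1])" using cellQ KC[of z] pz[of k] zk by simp
    moreover have "z \<notin> yy_cell L x a [] (ds @ [1])" using cellP pz[of k] zk False assms(7) by simp
    ultimately show ?thesis by blast
  next
    case True
    have "\<exists>i<k. \<alpha> i \<noteq> \<beta> i"
    proof (rule ccontr)
      assume "\<not> (\<exists>i<k. \<alpha> i \<noteq> \<beta> i)"
      then have all: "\<forall>i<k. \<alpha> i = \<beta> i" by simp
      have h: "\<forall>i<k. lin_part (L k) (a (bld L k a b d i)) = lin_part (L k) (b (bld L k a b d i))"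
        using all tk unfolding \<alpha>_def \<beta>_def by auto
      have "ds = d" unfolding ds_def using bld_eq[of k d L k a b, OF _ h] d by simp
      have "z \<in> yy_cell L x a [] es \<longleftrightarrow> z \<in> yy_cell L y b [] es" for z
      proof -
        have s1: "set (ds @ [e']) \<subseteq> {-1,1}" using es(2) esd \<open>ds = d\<close> by simp
        have "z \<in> yy_cell L x a [] es \<longleftrightarrow> memc L x a ds z \<and> e' * (L k (prj L x a ds z k) - L k x) \<ge> 0"
          using memb[OF aff ada s1, of z] memc_snoc[OF dsk, of L x a e' z] dsk kn esd \<open>ds = d\<close> by simp
        moreover have "z \<in> yy_cell L y b [] es \<longleftrightarrow> memc L x a ds z \<and> e' * (L k (prj L y b ds z k) - L k y) \<ge> 0"
          using memb[OF aff adb s1, of z] memc_snoc[OF dsk, of L y b e' z] dsk kn esd \<open>ds = d\<close> eq dss by simp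
        moreover have "L k (prj L y b ds z k) - L k y = L k (prj L x a ds z k) - L k x"
          using KC[of z] True all by simp
        ultimately show ?thesis by simp
      qed
      then show False using es(3) by blast
    qed
    then obtain i where i: "i < k" "\<alpha> i \<noteq> \<beta> i" by blast
    define \<sigma> where "\<sigma> = ds ! i"
    have \<sigma>: "\<sigma> \<in> {-1,1}" unfolding \<sigma>_def using dss i dsk by (auto simp: subset_iff)
    have \<sigma>\<sigma>: "\<sigma> * \<sigma> = 1" using sign_sq[OF \<sigma>] .
    have ab: "\<alpha> i = lin_part (L k) (a (bld L k a b d i))" "\<beta> i = lin_part (L k) (b (bld L k a b d i))"
      using tk[OF i(1)] unfolding \<alpha>_def \<beta>_def by simp_all
    have spos: "\<sigma> * (\<alpha> i - \<beta> i) > 0" unfolding \<sigma>_def ab unfolding ds_def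
      using bld_strict[of i k L k a b d] i ab by simp
    define lam where "lam = - (\<sigma> * (\<alpha> i - \<beta> i))"
    define w where "w = x + lam *\<^sub>R a ds"
    define z where "z = w + \<sigma> *\<^sub>R a (take i ds)"
    have ti: "set (take i ds) \<subseteq> {-1,1}" "length (take i ds) = i" "length (take i ds) < n"
      using dss i dsk kn by (auto dest: in_set_takeD)
    have a0: "\<And>c. c < k \<Longrightarrow> lin_part (L c) (a ds) = 0" using adapt0[OF ada _ dss] dsk kn by simp
    have a1: "lin_part (L k) (a ds) = 1" using adapt1[OF ada _ dss] dsk kn by simp
    have b0: "\<And>c. c < i \<Longrightarrow> lin_part (L c) (a (take i ds)) = 0" using adapt0[OF ada ti(3) ti(1)] ti(2) by simp
    have b1: "lin_part (L i) (a (take i ds)) = 1" using adapt1[OF ada ti(3) ti(1)] ti(2) by simp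
    have wc: "\<And>c. c < k \<Longrightarrow> L c w = L c x" unfolding w_def using a0 aff kn
      by (simp add: aff_add lin_scale)
    have wk: "L k w = L k x + lam" unfolding w_def using a1 by (simp add: aff_add[OF ak] lin_scale[OF ak])
    have zc: "\<And>c. c < i \<Longrightarrow> L c z = L c x" unfolding z_def using b0 wc aff kn i
      by (simp add: aff_add lin_scale)
    have ai: "affine_form (L i)" using aff i kn by simp
    have zi: "L i z = L i x + \<sigma>" unfolding z_def using b1 wc[OF i(1)] by (simp add: aff_add[OF ai] lin_scale[OF ai])
    have pzi: "prj L x a ds z i = z" by (rule prj_id) (use zc in auto)
    have pzS: "prj L x a ds z (Suc i) = w" using pzi zi \<sigma>\<sigma> unfolding z_def by simp
    have pw: "\<And>j. j \<le> k \<Longrightarrow> prj L x a ds w j = w" by (rule prj_id) (use wc in auto)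
    have "Suc i \<le> k" using i by simp
    note pwS = pw[OF this]
    have eqS: "prj L x a ds z (Suc i) = prj L x a ds w (Suc i)" by (rule trans[OF pzS sym[OF pwS]])
    have pzj: "prj L x a ds z j = w" if j1: "Suc i \<le> j" and j2: "j \<le> k" for j
    proof -
      have "prj L x a ds z j = prj L x a ds w j" by (rule prj_from[OF j1 eqS])
      also have "\<dots> = w" by (rule pw[OF j2])
      finally show ?thesis .
    qed
    have ccz: "\<And>j. j < k \<Longrightarrow> cc z j = (if j = i then \<sigma> else 0)"
    proof -
      fix j assume j: "j < k"
      show "cc z j = (if j = i then \<sigma> else 0)"
      proof (cases "j < i")
        case True
        have "prj L x a ds z j = z" by (rule prj_id) (use zc True in auto)
        then show ?thesis unfolding cc_def using zc True by auto
      next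
        case False
        show ?thesis
        proof (cases "j = i")
          case True then show ?thesis unfolding cc_def using pzi zi by simp
        next
          case False
          then show ?thesis unfolding cc_def using pzj[of j] wc[OF j] j \<open>\<not> j < i\<close> by simp
        qed
      qed
    qed
    have "memc L x a ds z" unfolding memc_def
    proof (intro allI impI)
      fix j assume "j < length ds"
      then have j: "j < k" using dsk by simp
      show "ds ! j * (L j (prj L x a ds z j) - L j x) \<ge> 0"
        using ccz[OF j] \<sigma>\<sigma> unfolding cc_def \<sigma>_def by (cases "j = i") auto
    qed
    moreover have "L k (prj L x a ds z k) - L k x = lam" using pzj[of k] i wk by simp
    moreover have "(\<Sum>j<k. cc z j * (\<alpha> j - \<beta> j)) = \<sigma> * (\<alpha> i - \<beta> i)"
    proof -
      have "(\<Sum>j<k. cc z j * (\<alpha> j - \<beta> j)) = (\<Sum>j<k. if j = i then \<sigma> * (\<alpha> j - \<beta> j) else 0)"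
        by (rule sum.cong) (auto simp: ccz)
      also have "\<dots> = \<sigma> * (\<alpha> i - \<beta> i)" using i by simp
      finally show ?thesis .
    qed
    ultimately have "z \<in> yy_cell L y b [] (ds @ [1])" "z \<notin> yy_cell L x a [] (ds @ [1])"
      using cellP cellQ KC[of z] True spos unfolding lam_def by auto
    then show ?thesis by blast
  qed
  then show ?thesis using sub dsk dss by blast
qed

end
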